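(* For any function $f:N\to L$ and any $L^+$-valued fuzzy measure $v$ on $N$, \[ \check{\mathcal{S}}_v(f) = \left[\mathop{\mathrm{SMax}}_{i=1}^p \left(f_{(i)}\mathbin{\mathrm{smin}} v(\{(1),\ldots,(i)\})\right)\right] \mathbin{\mathrm{smax}} \left[\mathop{\mathrm{SMax}}_{i=p+1}^n \left(f_{(i)}\mathbin{\mathrm{smin}} v(\{(i),\ldots,(n)\})\right)\right], \] where $(\cdot)$ is a permutation of $N$ such that $-\mathbf{1}\leq f_{(1)}\leq\cdots\leq f_{(p)}<\mathbf{0}\leq f_{(p+1)}\leq\cdots\leq f_{(n)}\leq \mathbf{1}$. Moreover, \begin{align*} \check{\mathcal{S}}_v(f) = & \left[\mathop{\mathrm{SMax}}_{A\subset N^+}\left(m(A) \mathbin{\mathrm{smin}}\Bigg[\bigwedge_{i\in A}f_i^+ \mathbin{\mathrm{smax}}\Big(- \bigwedge_{i\in A}f_i^-\Big) \Bigg] \right)\right]\mathbin{\mathrm{smax}}\\ & \left[\mathop{\mathrm{SMax}}_{A\subset N^-}\left(m(A) \mathbin{\mathrm{smin}}\Bigg[\bigwedge_{i\in A}f_i^+ \mathbin{\mathrm{smax}}\Big(- \bigwedge_{i\in A}f_i^-\Big) \Bigg] \right)\right]\mathbin{\mathrm{smax}}\\ & \left[\mathop{\mathrm{SMax}}_{A^+,A^-\neq\emptyset}\left(m(A) \mathbin{\mathrm{smin}}\Bigg[\bigwedge_{i\in A}f_i^+ \mathbin{\mathrm{smax}}\Big(- \bigwedge_{i\in A}f_i^-\Big)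 \Bigg] \right)\right], \end{align*} where $N^+:=\{i\in N\mid f_i\geq\mathbf{0}\}$, $N^-:=N\setminus N^+$, $A^+:=A\cap N^+$, $A^-:=A\cap N^-$, and $m$ is any function in the interval $[m_*,m^*]$ of Möbius transforms of $v$.
   Context: $L^+$ is a linearly ordered set with bottom $\mathbf{0}$ and top $\mathbf{1}$; $L^-:=\{-a\mid a\in L^+\}$ with reversed order ($-a\leq -b$ iff $a\geq b$), and $L:=L^+\cup L^-$ with $-\mathbf{0}$ identified with $\mathbf{0}$. $|a|=a$ if $a\in L^+$, $|a|=-a$ otherwise; $\mathrm{sign}$ takes values $-\mathbf{1},\mathbf{0},\mathbf{1}$ for $a<\mathbf{0}$, $a=\mathbf{0}$, $a>\mathbf{0}$. The symmetric maximum is $a\mathbin{\mathrm{smax}} b := -(|a|\vee|b|)$ if $b\neq -a$ and $|a|\vee|b|$ equals $-a$ or $-b$; $:=\mathbf{0}$ if $b=-a$; $:=|a|\vee|b|$ otherwise. The symmetric minimum is $a\mathbin{\mathrm{smin}} b := -(|a|\wedge|b|)$ if $\mathrm{sign}\,a\neq\mathrm{sign}\,b$, and $|a|\wedge|b|$ otherwise. $\mathop{\mathrm{SMax}}$ denotes the iterated symmetric maximum; it is unambiguous (associative) whenever all terms have the same sign, which is the case within each bracket above. $N=\{1,\ldots,n\}$; an $L^+$-valued fuzzy measure $v:\mathcal{P}(N)\to L^+$ satisfies $v(\emptyset)=\mathbf{0}$, $v(N)=\mathbf{1}$, and is monotone. The Sugeno integral of $g:N\to L^+$ is $\mathcal{S}_v(g)=\bigvee_{i=1}^n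 [g_{(i)}\wedge v(\{(i),\ldots,(n)\})]$ with $g_{(1)}\leq\cdots\leq g_{(n)}$. For $f:N\to L$, $f^+:=f\vee\mathbf{0}$, $f^-:=(-f)\vee\mathbf{0}$, and the symmetric Sugeno integral is defined by $\check{\mathcal{S}}_v(f)=\mathcal{S}_v(f^+)\mathbin{\mathrm{smax}}(-\mathcal{S}_v(f^-))$. The (ordinal) Möbius transforms of $v$ are the functions $m$ with $m_*\leq m\leq m^*$, where $m^*(A)=v(A)$ and $m_*(A)=v(A)$ if $v(A)>v(A\setminus\{j\})$ for all $j\in A$, and $m_*(A)=\mathbf{0}$ otherwise; for any such $m$, $\mathcal{S}_v(g)=\bigvee_{A\subset N}\big(\bigwedge_{i\in A}g_i\wedge m(A)\big)$. *)

theory Defs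
  imports Main
begin

text \<open>An element of L is a pair (b, a): b = True means the element a of L+,
  b = False means -a (with a \<noteq> 0).  The invariant identifies -0 with 0.\<close>

typedef (overloaded) ('a::"{linorder,order_bot,order_top}") symL =
  "{p :: bool \<times> 'a. fst p \<or> snd p \<noteq> bot}"
  morphisms rep_symL Abs_symL
  by (rule exI[of _ "(True, bot)"]) simp

definition posL :: "'a::{linorder,order_bot,order_top} \<Rightarrow> 'a symL" where
  "posL a = Abs_symL (True, a)"

definition zeroL :: "'a::{linorder,order_bot,order_top} symL" where
  "zeroL = posL bot"

definition oneL :: "'a::{linorder,order_bot,order_top} symL" where
  "oneL = posL top"

definition magn :: "'a::{linorder,order_bot,order_top} symL \<Rightarrow> 'a" where
  "magn x = snd (rep_symL x)"

definition isNeg :: "'a::{linorder,order_bot,order_top} symL \<Rightarrow> bool" where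
  "isNeg x = (\<not> fst (rep_symL x))"

definition negL :: "'a::{linorder,order_bot,order_top} symL \<Rightarrow> 'a symL" where
  "negL x = (if magn x = bot then x else Abs_symL (\<not> fst (rep_symL x), magn x))"

definition absL :: "'a::{linorder,order_bot,order_top} symL \<Rightarrow> 'a symL" where
  "absL x = posL (magn x)"

definition leL :: "'a::{linorder,order_bot,order_top} symL \<Rightarrow> 'a symL \<Rightarrow> bool" where
  "leL x y = (if isNeg x then (if isNeg y then magn y \<le> magn x else True)
              else (\<not> isNeg y \<and> magn x \<le> magn y))"

definition lessL :: "'a::{linorder,order_bot,order_top} symL \<Rightarrow> 'a symL \<Rightarrow> bool" where
  "lessL x y = (leL x y \<and> x \<noteq> y)"

definition signL :: "'a::{linorder,order_bot,order_top} symL \<Rightarrow> 'a symL" where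
  "signL x = (if lessL x zeroL then negL oneL else if x = zeroL then zeroL else oneL)"

definition smaxL :: "'a::{linorder,order_bot,order_top} symL \<Rightarrow> 'a symL \<Rightarrow> 'a symL" where
  "smaxL a b =
     (if b = negL a then zeroL
      else if posL (max (magn a) (magn b)) = negL a \<or> posL (max (magn a) (magn b)) = negL b
      then negL (posL (max (magn a) (magn b)))
      else posL (max (magn a) (magn b)))"

definition sminL :: "'a::{linorder,order_bot,order_top} symL \<Rightarrow> 'a symL \<Rightarrow> 'a symL" where
  "sminL a b =
     (if signL a \<noteq> signL b then negL (posL (min (magn a) (magn b)))
      else posL (min (magn a) (magn b)))"

text \<open>Iterated symmetric maximum of a list (empty = 0, the neutral element),
  and over a finite index set (in some enumeration; unambiguous when all
  terms have the same sign).\<close>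
definition SMaxL :: "'a::{linorder,order_bot,order_top} symL list \<Rightarrow> 'a symL" where
  "SMaxL xs = foldr smaxL xs zeroL"

definition SMaxSet :: "('b \<Rightarrow> 'a::{linorder,order_bot,order_top} symL) \<Rightarrow> 'b set \<Rightarrow> 'a symL" where
  "SMaxSet g S = SMaxL (map g (SOME xs. distinct xs \<and> set xs = S))"

definition bigjoin :: "('b \<Rightarrow> 'a::{linorder,order_bot,order_top}) \<Rightarrow> 'b set \<Rightarrow> 'a" where
  "bigjoin g A = (if A = {} then bot else Max (g ` A))"

definition bigmeet :: "('b \<Rightarrow> 'a::{linorder,order_bot,order_top}) \<Rightarrow> 'b set \<Rightarrow> 'a" where
  "bigmeet g A = (if A = {} then top else Min (g ` A))"

definition fuzzy_measure :: "nat \<Rightarrow> (nat set \<Rightarrow> 'a::{linorder,order_bot,order_top}) \<Rightarrow> bool" where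
  "fuzzy_measure n v \<longleftrightarrow> v {} = bot \<and> v {1..n} = top \<and>
     (\<forall>A B. A \<subseteq> B \<and> B \<subseteq> {1..n} \<longrightarrow> v A \<le> v B)"

definition sugeno :: "nat \<Rightarrow> (nat set \<Rightarrow> 'a::{linorder,order_bot,order_top}) \<Rightarrow> (nat \<Rightarrow> 'a) \<Rightarrow> 'a" where
  "sugeno n v g =
     (let \<sigma> = (SOME \<sigma>. bij_betw \<sigma> {1..n} {1..n} \<and> (\<forall>i\<in>{1..<n}. g (\<sigma> i) \<le> g (\<sigma> (Suc i))))
      in bigjoin (\<lambda>i. min (g (\<sigma> i)) (v (\<sigma> ` {i..n}))) {1..n})"

definition posPart :: "'a::{linorder,order_bot,order_top} symL \<Rightarrow> 'a" where
  "posPart x = magn (if leL x zeroL then zeroL else x)"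

definition negPart :: "'a::{linorder,order_bot,order_top} symL \<Rightarrow> 'a" where
  "negPart x = magn (if leL (negL x) zeroL then zeroL else negL x)"

definition sym_sugeno :: "nat \<Rightarrow> (nat set \<Rightarrow> 'a::{linorder,order_bot,order_top}) \<Rightarrow> (nat \<Rightarrow> 'a symL) \<Rightarrow> 'a symL" where
  "sym_sugeno n v f =
     smaxL (posL (sugeno n v (\<lambda>i. posPart (f i)))) (negL (posL (sugeno n v (\<lambda>i. negPart (f i)))))"

definition mobius_upper :: "(nat set \<Rightarrow> 'a::{linorder,order_bot,order_top}) \<Rightarrow> nat set \<Rightarrow> 'a" where
  "mobius_upper v A = v A"

definition mobius_lower :: "(nat set \<Rightarrow> 'a::{linorder,order_bot,order_top}) \<Rightarrow> nat set \<Rightarrow> 'a" where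
  "mobius_lower v A = (if \<forall>j\<in>A. v A > v (A - {j}) then v A else bot)"

definition mobius_transform :: "nat \<Rightarrow> (nat set \<Rightarrow> 'a::{linorder,order_bot,order_top}) \<Rightarrow> (nat set \<Rightarrow> 'a) \<Rightarrow> bool" where
  "mobius_transform n v m \<longleftrightarrow>
     (\<forall>A. A \<subseteq> {1..n} \<longrightarrow> mobius_lower v A \<le> m A \<and> m A \<le> mobius_upper v A)"

end

theory Submission
  imports Defs
begin


lemma rep_posL[simp]: "rep_symL (posL a) = (True, a)"
  by (simp add: posL_def Abs_symL_inverse)
lemma magn_posL[simp]: "magn (posL a) = a" by (simp add: magn_def)
lemma isNeg_posL[simp]: "isNeg (posL a) = False" by (simp add: isNeg_def)
lemma symL_eq: "x = y \<longleftrightarrow> isNeg x = isNeg y \<and> magn x = magn y"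
  using rep_symL_inject[of x y]
  by (cases "rep_symL x"; cases "rep_symL y") (auto simp: isNeg_def magn_def)
lemma isNeg_magn: "isNeg x \<Longrightarrow> magn x \<noteq> bot"
  using rep_symL[of x] by (auto simp: isNeg_def magn_def)
lemma magn_negL[simp]: "magn (negL x) = magn x"
  using rep_symL[of x]
  by (auto simp: negL_def magn_def Abs_symL_inverse)
lemma isNeg_negL[simp]: "isNeg (negL x) = (magn x \<noteq> bot \<and> \<not> isNeg x)"
  using rep_symL[of x] isNeg_magn[of x]
  by (auto simp: negL_def magn_def isNeg_def Abs_symL_inverse)
lemma magn_zeroL[simp]: "magn zeroL = bot" by (simp add: zeroL_def)
lemma isNeg_zeroL[simp]: "isNeg zeroL = False" by (simp add: zeroL_def)
lemma magn_oneL[simp]: "magn oneL = top" by (simp add: oneL_def)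
lemma isNeg_oneL[simp]: "isNeg oneL = False" by (simp add: oneL_def)

lemma top_bot_magn: "top = (bot::'a::{linorder,order_bot,order_top}) \<Longrightarrow> magn (x::'a symL) = bot"
  by (metis bot.extremum_uniqueI top_greatest)

lemma posPart_eq: "posPart x = (if isNeg x then bot else magn x)"
  using isNeg_magn[of x] by (auto simp: posPart_def leL_def bot_unique)
lemma negPart_eq: "negPart x = (if isNeg x then magn x else bot)"
  using isNeg_magn[of x] by (auto simp: negPart_def leL_def bot_unique)

lemma posPart_mono: "leL x y \<Longrightarrow> posPart x \<le> posPart y"
  by (auto simp: posPart_eq leL_def split: if_splits)
lemma negPart_anti: "leL x y \<Longrightarrow> negPart y \<le> negPart x"
  by (auto simp: negPart_eq leL_def split: if_splits)

lemma lessL_zero: "lessL x zeroL \<longleftrightarrow> isNeg x"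
  using isNeg_magn[of x] by (auto simp: lessL_def leL_def symL_eq bot_unique)
lemma leL_zero: "leL zeroL x \<longleftrightarrow> \<not> isNeg x"
  by (auto simp: leL_def)

lemma smaxL_comm: "smaxL a b = smaxL b a"
  unfolding smaxL_def using isNeg_magn[of a] isNeg_magn[of b]
  by (auto simp: symL_eq max_def bot_unique)

lemma smaxL_pos: "\<not> isNeg a \<Longrightarrow> \<not> isNeg b \<Longrightarrow> smaxL a b = posL (max (magn a) (magn b))"
  unfolding smaxL_def using isNeg_magn[of a] isNeg_magn[of b]
  by (auto simp: symL_eq max_def bot_unique)

lemma smaxL_neg: "isNeg a \<or> magn a = bot \<Longrightarrow> isNeg b \<or> magn b = bot \<Longrightarrow>
   smaxL a b = negL (posL (max (magn a) (magn b)))"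
  unfolding smaxL_def using isNeg_magn[of a] isNeg_magn[of b]
  by (auto simp: symL_eq max_def bot_unique)

lemma smaxL_zero: "smaxL x zeroL = x"
  unfolding smaxL_def using isNeg_magn[of x]
  by (auto simp: symL_eq max_def bot_unique)

lemma signL_posL: "\<not> isNeg (signL (posL b))"
  unfolding signL_def lessL_zero by simp
lemma signL_neg: "isNeg x \<Longrightarrow> isNeg (signL x)"
  unfolding signL_def lessL_zero using isNeg_magn[of x] top_bot_magn[of x] by auto
lemma signL_nonneg: "\<not> isNeg x \<Longrightarrow> signL x = (if magn x = bot then zeroL else oneL)"
  unfolding signL_def lessL_zero using isNeg_magn[of x] by (auto simp: symL_eq)

lemma sminL_pos: "\<not> isNeg x \<Longrightarrow> sminL x (posL b) = posL (min (magn x) b)"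
proof -
  assume x: "\<not> isNeg x"
  show ?thesis
  proof (cases "signL x = signL (posL b)")
    case True then show ?thesis by (simp add: sminL_def)
  next
    case False
    then have "magn x = bot \<or> b = bot" using x by (auto simp: signL_nonneg split: if_splits)
    then have "min (magn x) b = bot" by (auto simp: min_def bot_unique)
    then show ?thesis using False by (simp add: sminL_def negL_def)
  qed
qed

lemma sminL_neg: "isNeg x \<Longrightarrow> sminL x (posL b) = negL (posL (min (magn x) b))"
proof -
  assume x: "isNeg x"
  have "signL x \<noteq> signL (posL b)" using signL_posL[of b] signL_neg[OF x] by metis
  then show ?thesis by (simp add: sminL_def)
qed

lemma sminL_posneg: "sminL (posL a) (negL (posL b)) = negL (posL (min a b))"
proof (cases "b = bot")
  case True
  then have "negL (posL b) = posL bot" by (simp add: negL_def)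
  then show ?thesis using True sminL_pos[of "posL a" bot] by (simp add: negL_def)
next
  case False
  then have "isNeg (negL (posL b))" by simp
  then have "signL (posL a) \<noteq> signL (negL (posL b))" using signL_posL[of a] signL_neg by metis
  then show ?thesis by (simp add: sminL_def)
qed

lemma negL_posL_bot: "negL (posL bot) = zeroL"
  by (simp add: symL_eq)



lemma bigjoin_le_iff: "finite A \<Longrightarrow> bigjoin g A \<le> x \<longleftrightarrow> (\<forall>a\<in>A. g a \<le> x)"
  by (auto simp: bigjoin_def)
lemma bigjoin_ge: "finite A \<Longrightarrow> a \<in> A \<Longrightarrow> g a \<le> bigjoin g A"
  by (auto simp: bigjoin_def)
lemma le_bigmeet_iff: "finite A \<Longrightarrow> x \<le> bigmeet g A \<longleftrightarrow> (\<forall>a\<in>A. x \<le> g a)"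
  by (auto simp: bigmeet_def)
lemma bigmeet_le: "finite A \<Longrightarrow> a \<in> A \<Longrightarrow> bigmeet g A \<le> g a"
  by (auto simp: bigmeet_def)

lemma bigjoin_mono:
  assumes "finite A" "finite B" "\<And>a. a \<in> A \<Longrightarrow> g a = bot \<or> (\<exists>b\<in>B. g a \<le> h b)"
  shows "bigjoin g A \<le> bigjoin h B"
  unfolding bigjoin_le_iff[OF assms(1)]
proof
  fix a assume "a \<in> A"
  from assms(3)[OF this] show "g a \<le> bigjoin h B"
    using bigjoin_ge[OF assms(2)] order_trans by fastforce
qed

lemma bigjoin_insert: "finite S \<Longrightarrow> bigjoin g (insert x S) = max (g x) (bigjoin g S)"
  by (auto simp: bigjoin_def max_def bot_unique)

lemma bigjoin_image: "bigjoin g (h ` S) = bigjoin (g \<circ> h) S"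
  by (simp add: bigjoin_def image_comp)

lemma SMaxL_pos: "\<forall>x\<in>set xs. \<not> isNeg x \<Longrightarrow> SMaxL xs = posL (bigjoin magn (set xs))"
proof (induction xs)
  case Nil then show ?case by (simp add: SMaxL_def bigjoin_def zeroL_def)
next
  case (Cons x xs)
  then show ?case by (simp add: SMaxL_def smaxL_pos bigjoin_insert)
qed

lemma SMaxL_neg: "\<forall>x\<in>set xs. isNeg x \<or> magn x = bot \<Longrightarrow> SMaxL xs = negL (posL (bigjoin magn (set xs)))"
proof (induction xs)
  case Nil then show ?case by (simp add: SMaxL_def bigjoin_def negL_posL_bot)
next
  case (Cons x xs)
  then show ?case by (simp add: SMaxL_def smaxL_neg bigjoin_insert)
qed

lemma SMaxSet_list: "finite S \<Longrightarrow> \<exists>xs. SMaxSet T S = SMaxL (map T xs) \<and> set xs = S"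
proof -
  assume "finite S"
  then have ex: "\<exists>xs. distinct xs \<and> set xs = S" using finite_distinct_list by metis
  have "distinct (SOME xs. distinct xs \<and> set xs = S) \<and> set (SOME xs. distinct xs \<and> set xs = S) = S"
    by (rule someI_ex[OF ex])
  then show ?thesis unfolding SMaxSet_def by (intro exI[of _ "SOME xs. distinct xs \<and> set xs = S"]) simp
qed

lemma SMaxSet_pos: "finite S \<Longrightarrow> \<forall>A\<in>S. \<not> isNeg (T A) \<Longrightarrow> SMaxSet T S = posL (bigjoin (magn \<circ> T) S)"
proof -
  assume a: "finite S" "\<forall>A\<in>S. \<not> isNeg (T A)"
  obtain xs where "SMaxSet T S = SMaxL (map T xs)" "set xs = S" using SMaxSet_list[OF a(1)] by blast
  moreover have "\<forall>x\<in>set (map T xs). \<not> isNeg x" using a(2) \<open>set xs = S\<close> by auto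
  ultimately have "SMaxSet T S = posL (bigjoin magn (set (map T xs)))" using SMaxL_pos[of "map T xs"] by argo
  also have "set (map T xs) = T ` S" using \<open>set xs = S\<close> by simp
  finally show ?thesis by (simp only: bigjoin_image)
qed

lemma SMaxSet_neg: "finite S \<Longrightarrow> \<forall>A\<in>S. isNeg (T A) \<or> magn (T A) = bot \<Longrightarrow> SMaxSet T S = negL (posL (bigjoin (magn \<circ> T) S))"
proof -
  assume a: "finite S" "\<forall>A\<in>S. isNeg (T A) \<or> magn (T A) = bot"
  obtain xs where "SMaxSet T S = SMaxL (map T xs)" "set xs = S" using SMaxSet_list[OF a(1)] by blast
  moreover have "\<forall>x\<in>set (map T xs). isNeg x \<or> magn x = bot" using a(2) \<open>set xs = S\<close> by auto
  ultimately have "SMaxSet T S = negL (posL (bigjoin magn (set (map T xs))))" using SMaxL_neg[of "map T xs"] by argo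
  also have "set (map T xs) = T ` S" using \<open>set xs = S\<close> by simp
  finally show ?thesis by (simp only: bigjoin_image)
qed



definition charS :: "nat \<Rightarrow> (nat set \<Rightarrow> 'a::{linorder,order_bot,order_top}) \<Rightarrow> (nat \<Rightarrow> 'a) \<Rightarrow> 'a" where
  "charS n v h = bigjoin (\<lambda>A. min (v A) (bigmeet h A)) (Pow {1..n})"

lemma chain_char:
  assumes fm: "fuzzy_measure n v"
    and Bsub: "\<And>i. i \<in> {1..n} \<Longrightarrow> B i \<subseteq> {1..n}"
    and Bmem: "\<And>i. i \<in> {1..n} \<Longrightarrow> \<sigma> i \<in> B i"
    and Bmin: "\<And>i j. i \<in> {1..n} \<Longrightarrow> j \<in> B i \<Longrightarrow> h (\<sigma> i) \<le> h j"
    and cover: "\<And>A. A \<subseteq> {1..n} \<Longrightarrow> A \<noteq> {} \<Longrightarrow> \<exists>i\<in>{1..n}. \<sigma> i \<in> A \<and> A \<subseteq> B i"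
  shows "charS n v h = bigjoin (\<lambda>i. min (h (\<sigma> i)) (v (B i))) {1..n}"
proof (rule antisym)
  have mono: "\<And>A B. A \<subseteq> B \<Longrightarrow> B \<subseteq> {1..n} \<Longrightarrow> v A \<le> v B" using fm by (auto simp: fuzzy_measure_def)
  have v0: "v {} = bot" using fm by (simp add: fuzzy_measure_def)
  show "charS n v h \<le> bigjoin (\<lambda>i. min (h (\<sigma> i)) (v (B i))) {1..n}"
    unfolding charS_def
  proof (rule bigjoin_mono)
    fix A assume A: "A \<in> Pow {1..n}"
    show "min (v A) (bigmeet h A) = bot \<or> (\<exists>i\<in>{1..n}. min (v A) (bigmeet h A) \<le> min (h (\<sigma> i)) (v (B i)))"
    proof (cases "A = {}")
      case True then show ?thesis using v0 by simp
    next
      case False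
      then obtain i where i: "i \<in> {1..n}" "\<sigma> i \<in> A" "A \<subseteq> B i" using cover A by blast
      have fA: "finite A" using A finite_subset by blast
      have "v A \<le> v (B i)" using mono[OF i(3) Bsub[OF i(1)]] .
      moreover have "bigmeet h A \<le> h (\<sigma> i)" using bigmeet_le[OF fA i(2)] .
      ultimately show ?thesis using i(1) by (auto simp: min_le_iff_disj min.bounded_iff)
    qed
  qed auto
  show "bigjoin (\<lambda>i. min (h (\<sigma> i)) (v (B i))) {1..n} \<le> charS n v h"
    unfolding charS_def
  proof (rule bigjoin_mono)
    fix i assume i: "i \<in> {1..n}"
    have fB: "finite (B i)" using Bsub[OF i] finite_subset by blast
    have "h (\<sigma> i) \<le> bigmeet h (B i)" using le_bigmeet_iff[OF fB] Bmin[OF i] by blast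
    then have "min (h (\<sigma> i)) (v (B i)) \<le> min (v (B i)) (bigmeet h (B i))"
      by (auto simp: min_le_iff_disj min.bounded_iff)
    then show "min (h (\<sigma> i)) (v (B i)) = bot \<or> (\<exists>A\<in>Pow {1..n}. min (h (\<sigma> i)) (v (B i)) \<le> min (v A) (bigmeet h A))"
      using Bsub[OF i] by blast
  qed auto
qed

lemma chain_up:
  fixes h :: "nat \<Rightarrow> 'a::linorder"
  assumes "\<forall>i\<in>{1..<n}. h (\<sigma> i) \<le> h (\<sigma> (Suc i))" "1 \<le> i" "i \<le> k" "k \<le> n"
  shows "h (\<sigma> i) \<le> h (\<sigma> k)"
  using assms(3,4)
proof (induction k rule: dec_induct)
  case base then show ?case by simp
next
  case (step k)
  then have "h (\<sigma> k) \<le> h (\<sigma> (Suc k))" using assms(1,2) by auto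
  with step show ?case by auto
qed

lemma chain_down:
  fixes h :: "nat \<Rightarrow> 'a::linorder"
  assumes "\<forall>i\<in>{1..<n}. h (\<sigma> (Suc i)) \<le> h (\<sigma> i)" "1 \<le> i" "i \<le> k" "k \<le> n"
  shows "h (\<sigma> k) \<le> h (\<sigma> i)"
  using assms(3,4)
proof (induction k rule: dec_induct)
  case base then show ?case by simp
next
  case (step k)
  then have "h (\<sigma> (Suc k)) \<le> h (\<sigma> k)" using assms(1,2) by auto
  with step show ?case by auto
qed

lemma sorted_char:
  assumes fm: "fuzzy_measure n v" and bij: "bij_betw \<sigma> {1..n} {1..n}"
    and srt: "\<forall>i\<in>{1..<n}. h (\<sigma> i) \<le> h (\<sigma> (Suc i))"
  shows "charS n v h = bigjoin (\<lambda>i. min (h (\<sigma> i)) (v (\<sigma> ` {i..n}))) {1..n}"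
proof (rule chain_char[OF fm])
  fix i assume i: "i \<in> {1..n}"
  show "\<sigma> ` {i..n} \<subseteq> {1..n}" using bij i unfolding bij_betw_def by auto
  show "\<sigma> i \<in> \<sigma> ` {i..n}" using i by auto
  fix j assume "j \<in> \<sigma> ` {i..n}"
  then obtain k where "k \<in> {i..n}" "j = \<sigma> k" by auto
  then show "h (\<sigma> i) \<le> h j" using chain_up[where h=h and \<sigma>=\<sigma>, OF srt, of i k] i by auto
next
  fix A assume A: "A \<subseteq> {1..n}" "A \<noteq> {}"
  define I where "I = {i\<in>{1..n}. \<sigma> i \<in> A}"
  have img: "\<sigma> ` {1..n} = {1..n}" using bij_betw_imp_surj_on[OF bij] .
  have "I \<noteq> {}"
  proof -
    obtain a where "a \<in> A" using A(2) by blast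
    then have "a \<in> \<sigma> ` {1..n}" using A(1) img by blast
    then obtain k where "k \<in> {1..n}" "\<sigma> k = a" by blast
    then have "k \<in> I" using \<open>a \<in> A\<close> unfolding I_def by simp
    then show ?thesis by blast
  qed
  moreover have "finite I" unfolding I_def by auto
  ultimately have m: "Min I \<in> I" "\<And>k. k \<in> I \<Longrightarrow> Min I \<le> k" by auto
  have "A \<subseteq> \<sigma> ` {Min I..n}"
  proof
    fix a assume "a \<in> A"
    then obtain k where k: "k \<in> {1..n}" "a = \<sigma> k" using A img by blast
    then have "k \<in> I" using \<open>a \<in> A\<close> unfolding I_def by auto
    then show "a \<in> \<sigma> ` {Min I..n}" using m(2) k by auto
  qed
  then show "\<exists>i\<in>{1..n}. \<sigma> i \<in> A \<and> A \<subseteq> \<sigma> ` {i..n}" using m(1) unfolding I_def by blast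
qed

lemma antisorted_char:
  assumes fm: "fuzzy_measure n v" and bij: "bij_betw \<sigma> {1..n} {1..n}"
    and srt: "\<forall>i\<in>{1..<n}. h (\<sigma> (Suc i)) \<le> h (\<sigma> i)"
  shows "charS n v h = bigjoin (\<lambda>i. min (h (\<sigma> i)) (v (\<sigma> ` {1..i}))) {1..n}"
proof (rule chain_char[OF fm])
  fix i assume i: "i \<in> {1..n}"
  show "\<sigma> ` {1..i} \<subseteq> {1..n}" using bij i unfolding bij_betw_def by auto
  show "\<sigma> i \<in> \<sigma> ` {1..i}" using i by auto
  fix j assume "j \<in> \<sigma> ` {1..i}"
  then obtain k where "k \<in> {1..i}" "j = \<sigma> k" by auto
  then show "h (\<sigma> i) \<le> h j" using chain_down[where h=h and \<sigma>=\<sigma>, OF srt, of k i] i by auto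
next
  fix A assume A: "A \<subseteq> {1..n}" "A \<noteq> {}"
  define I where "I = {i\<in>{1..n}. \<sigma> i \<in> A}"
  have img: "\<sigma> ` {1..n} = {1..n}" using bij_betw_imp_surj_on[OF bij] .
  have "I \<noteq> {}"
  proof -
    obtain a where "a \<in> A" using A(2) by blast
    then have "a \<in> \<sigma> ` {1..n}" using A(1) img by blast
    then obtain k where "k \<in> {1..n}" "\<sigma> k = a" by blast
    then have "k \<in> I" using \<open>a \<in> A\<close> unfolding I_def by simp
    then show ?thesis by blast
  qed
  moreover have "finite I" unfolding I_def by auto
  ultimately have m: "Max I \<in> I" "\<And>k. k \<in> I \<Longrightarrow> k \<le> Max I" by auto
  have "A \<subseteq> \<sigma> ` {1..Max I}"
  proof
    fix a assume "a \<in> A"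
    then obtain k where k: "k \<in> {1..n}" "a = \<sigma> k" using A img by blast
    then have "k \<in> I" using \<open>a \<in> A\<close> unfolding I_def by auto
    then show "a \<in> \<sigma> ` {1..Max I}" using m(2) k by auto
  qed
  then show "\<exists>i\<in>{1..n}. \<sigma> i \<in> A \<and> A \<subseteq> \<sigma> ` {1..i}" using m(1) unfolding I_def by blast
qed

lemma sort_exists: "\<exists>\<sigma>. bij_betw \<sigma> {1..n} {1..n} \<and> (\<forall>i\<in>{1..<n}. (g::nat \<Rightarrow> 'a::linorder) (\<sigma> i) \<le> g (\<sigma> (Suc i)))"
proof -
  define xs where "xs = sort_key g [1..<n+1]"
  have len: "length xs = n" and st: "set xs = {1..n}" and d: "distinct xs"
    unfolding xs_def by auto
  have so: "sorted (map g xs)" unfolding xs_def by simp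
  define \<sigma> where "\<sigma> i = xs ! (i - 1)" for i
  have "bij_betw (\<lambda>i. xs ! i) {..<length xs} (set xs)" using bij_betw_nth[OF d refl refl] by simp
  then have b0: "bij_betw (\<lambda>i. xs ! i) {..<n} {1..n}" using len st by simp
  have b1: "bij_betw (\<lambda>i. i - 1) {1..n} {..<n}"
    by (rule bij_betw_byWitness[where f'="\<lambda>i. i + 1"]) auto
  have "bij_betw ((\<lambda>i. xs ! i) \<circ> (\<lambda>i. i - 1)) {1..n} {1..n}" using bij_betw_trans[OF b1 b0] .
  then have "bij_betw \<sigma> {1..n} {1..n}" unfolding \<sigma>_def comp_def .
  moreover have "\<forall>i\<in>{1..<n}. g (\<sigma> i) \<le> g (\<sigma> (Suc i))"
  proof
    fix i assume i: "i \<in> {1..<n}"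
    have "g (xs ! (i - 1)) \<le> g (xs ! i)"
      using so i len by (auto simp: sorted_iff_nth_mono)
    then show "g (\<sigma> i) \<le> g (\<sigma> (Suc i))" using i len by (simp add: \<sigma>_def nth_map)
  qed
  ultimately show ?thesis by blast
qed

lemma sugeno_char:
  assumes fm: "fuzzy_measure n v"
  shows "sugeno n v h = charS n v h"
proof -
  define P where "P \<sigma> \<longleftrightarrow> bij_betw \<sigma> {1..n} {1..n} \<and> (\<forall>i\<in>{1..<n}. h (\<sigma> i) \<le> h (\<sigma> (Suc i)))" for \<sigma>
  have "P (SOME \<sigma>. P \<sigma>)" using someI_ex[of P] sort_exists[of n h] unfolding P_def by blast
  then show ?thesis unfolding sugeno_def Let_def P_def[symmetric]
    using sorted_char[OF fm, of "SOME \<sigma>. P \<sigma>" h] unfolding P_def by simp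
qed



lemma reduce:
  assumes fm: "fuzzy_measure n v"
  shows "A \<subseteq> {1..n} \<Longrightarrow> \<exists>C\<subseteq>A. v C = v A \<and> (\<forall>j\<in>C. v (C - {j}) < v C)"
proof (induction "card A" arbitrary: A rule: less_induct)
  case less
  show ?case
  proof (cases "\<forall>j\<in>A. v (A - {j}) < v A")
    case True then show ?thesis by blast
  next
    case False
    then obtain j where j: "j \<in> A" "\<not> v (A - {j}) < v A" by blast
    have "v (A - {j}) \<le> v A" using fm less.prems by (auto simp: fuzzy_measure_def)
    then have eq: "v (A - {j}) = v A" using j(2) by simp
    have fA: "finite A" using less.prems finite_subset by blast
    have c: "card (A - {j}) < card A" using fA j(1) by (rule card_Diff1_less)
    have s: "A - {j} \<subseteq> {1..n}" using less.prems by auto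
    have ex: "\<exists>C\<subseteq>A - {j}. v C = v (A - {j}) \<and> (\<forall>j\<in>C. v (C - {j}) < v C)"
      by (rule less.hyps[OF c s])
    then obtain C where C: "C \<subseteq> A - {j}" "v C = v (A - {j})" "\<forall>j\<in>C. v (C - {j}) < v C"
      by auto
    have "C \<subseteq> A" using C(1) by auto
    then show ?thesis using eq C(2,3) by auto
  qed
qed

lemma mobius_char:
  assumes fm: "fuzzy_measure n v" and mt: "mobius_transform n v m"
  shows "bigjoin (\<lambda>A. min (m A) (bigmeet h A)) (Pow {1..n}) = charS n v h"
proof (rule antisym)
  show "bigjoin (\<lambda>A. min (m A) (bigmeet h A)) (Pow {1..n}) \<le> charS n v h"
    unfolding charS_def
  proof (rule bigjoin_mono)
    fix A assume A: "A \<in> Pow {1..n}"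
    then have "m A \<le> v A" using mt by (auto simp: mobius_transform_def mobius_upper_def)
    then have "min (m A) (bigmeet h A) \<le> min (v A) (bigmeet h A)" by (auto simp: min_def)
    then show "min (m A) (bigmeet h A) = bot \<or> (\<exists>b\<in>Pow {1..n}. min (m A) (bigmeet h A) \<le> min (v b) (bigmeet h b))"
      using A by blast
  qed auto
  show "charS n v h \<le> bigjoin (\<lambda>A. min (m A) (bigmeet h A)) (Pow {1..n})"
    unfolding charS_def
  proof (rule bigjoin_mono)
    fix A assume A: "A \<in> Pow {1..n}"
    then obtain C where C: "C \<subseteq> A" "v C = v A" "\<forall>j\<in>C. v (C - {j}) < v C"
      using reduce[OF fm, of A] by blast
    have CA: "C \<subseteq> {1..n}" using A C(1) by blast
    have "mobius_lower v C = v A" using C by (simp add: mobius_lower_def)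
    then have "v A \<le> m C" using mt CA by (auto simp: mobius_transform_def)
    moreover have "bigmeet h A \<le> bigmeet h C"
    proof -
      have fA: "finite A" using A finite_subset by blast
      have fC: "finite C" using CA finite_subset by blast
      show ?thesis unfolding le_bigmeet_iff[OF fC] using bigmeet_le[OF fA] C(1) by blast
    qed
    ultimately have "min (v A) (bigmeet h A) \<le> min (m C) (bigmeet h C)"
      by (auto simp: min_le_iff_disj min.bounded_iff)
    then show "min (v A) (bigmeet h A) = bot \<or> (\<exists>b\<in>Pow {1..n}. min (v A) (bigmeet h A) \<le> min (m b) (bigmeet h b))"
      using CA by blast
  qed auto
qed

lemma bigjoin_cong: "(\<And>a. a \<in> A \<Longrightarrow> g a = h a) \<Longrightarrow> bigjoin g A = bigjoin h A"
  unfolding bigjoin_def by (simp cong: image_cong)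

lemma SMaxL_map_pos: "\<forall>i\<in>set is. \<not> isNeg (F i) \<Longrightarrow> SMaxL (map F is) = posL (bigjoin (magn \<circ> F) (set is))"
proof -
  assume a: "\<forall>i\<in>set is. \<not> isNeg (F i)"
  have "\<forall>x\<in>set (map F is). \<not> isNeg x" using a by auto
  then have "SMaxL (map F is) = posL (bigjoin magn (set (map F is)))" by (rule SMaxL_pos)
  also have "set (map F is) = F ` set is" by simp
  finally show ?thesis by (simp only: bigjoin_image)
qed

lemma SMaxL_map_neg: "\<forall>i\<in>set is. isNeg (F i) \<or> magn (F i) = bot \<Longrightarrow> SMaxL (map F is) = negL (posL (bigjoin (magn \<circ> F) (set is)))"
proof -
  assume a: "\<forall>i\<in>set is. isNeg (F i) \<or> magn (F i) = bot"
  have "\<forall>x\<in>set (map F is). isNeg x \<or> magn x = bot" using a by auto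
  then have "SMaxL (map F is) = negL (posL (bigjoin magn (set (map F is))))" by (rule SMaxL_neg)
  also have "set (map F is) = F ` set is" by simp
  finally show ?thesis by (simp only: bigjoin_image)
qed



lemma part1:
  fixes n :: nat and v :: "nat set \<Rightarrow> 'a::{linorder,order_bot,order_top}"
    and f :: "nat \<Rightarrow> 'a symL"
  assumes fm: "fuzzy_measure n v"
    and bij: "bij_betw \<sigma> {1..n} {1..n}" and pn: "p \<le> n"
    and srt: "\<forall>i\<in>{1..<n}. leL (f (\<sigma> i)) (f (\<sigma> (Suc i)))"
    and neg: "\<forall>i\<in>{1..p}. lessL (f (\<sigma> i)) zeroL"
    and pos: "\<forall>i\<in>{p+1..n}. leL zeroL (f (\<sigma> i))"
  shows "sym_sugeno n v f =
          smaxL (SMaxL (map (\<lambda>i. sminL (f (\<sigma> i)) (posL (v (\<sigma> ` {1..i})))) [1..<p+1]))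
                (SMaxL (map (\<lambda>i. sminL (f (\<sigma> i)) (posL (v (\<sigma> ` {i..n})))) [p+1..<n+1]))"
proof -
  have negi: "isNeg (f (\<sigma> i))" if "i \<in> {1..p}" for i using neg that by (simp add: lessL_zero)
  have posi: "\<not> isNeg (f (\<sigma> i))" if "i \<in> {p+1..n}" for i using pos that by (simp add: leL_zero)
  have sP: "\<forall>i\<in>{1..<n}. posPart (f (\<sigma> i)) \<le> posPart (f (\<sigma> (Suc i)))"
    using srt posPart_mono by blast
  have sN: "\<forall>i\<in>{1..<n}. negPart (f (\<sigma> (Suc i))) \<le> negPart (f (\<sigma> i))"
    using srt negPart_anti by blast
  define P where "P = bigjoin (\<lambda>i. min (magn (f (\<sigma> i))) (v (\<sigma> ` {i..n}))) {p+1..n}"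
  define N where "N = bigjoin (\<lambda>i. min (magn (f (\<sigma> i))) (v (\<sigma> ` {1..i}))) {1..p}"
  have SP: "sugeno n v (\<lambda>i. posPart (f i)) = P"
  proof -
    have "sugeno n v (\<lambda>i. posPart (f i)) = bigjoin (\<lambda>i. min (posPart (f (\<sigma> i))) (v (\<sigma> ` {i..n}))) {1..n}"
      using sugeno_char[OF fm] sorted_char[OF fm bij, of "\<lambda>i. posPart (f i)"] sP by simp
    also have "\<dots> = P" unfolding P_def
    proof (rule antisym; rule bigjoin_mono)
      fix i assume i: "i \<in> {1..n}"
      show "min (posPart (f (\<sigma> i))) (v (\<sigma> ` {i..n})) = bot \<or>
            (\<exists>b\<in>{p+1..n}. min (posPart (f (\<sigma> i))) (v (\<sigma> ` {i..n})) \<le> min (magn (f (\<sigma> b))) (v (\<sigma> ` {b..n})))"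
      proof (cases "i \<le> p")
        case True then have "isNeg (f (\<sigma> i))" using negi i by auto
        then show ?thesis by (simp add: posPart_eq)
      next
        case False then have ii: "i \<in> {p+1..n}" using i by auto
        show ?thesis using posi[OF ii] ii by (intro disjI2 bexI[of _ i]) (auto simp: posPart_eq)
      qed
    next
      fix i assume i: "i \<in> {p+1..n}"
      then show "min (magn (f (\<sigma> i))) (v (\<sigma> ` {i..n})) = bot \<or>
            (\<exists>b\<in>{1..n}. min (magn (f (\<sigma> i))) (v (\<sigma> ` {i..n})) \<le> min (posPart (f (\<sigma> b))) (v (\<sigma> ` {b..n})))"
        using posi[OF i] by (intro disjI2 bexI[of _ i]) (auto simp: posPart_eq)
    qed auto
    finally show ?thesis .
  qed
  have SN: "sugeno n v (\<lambda>i. negPart (f i)) = N"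
  proof -
    have "sugeno n v (\<lambda>i. negPart (f i)) = bigjoin (\<lambda>i. min (negPart (f (\<sigma> i))) (v (\<sigma> ` {1..i}))) {1..n}"
      using sugeno_char[OF fm] antisorted_char[OF fm bij, of "\<lambda>i. negPart (f i)"] sN by simp
    also have "\<dots> = N" unfolding N_def
    proof (rule antisym; rule bigjoin_mono)
      fix i assume i: "i \<in> {1..n}"
      show "min (negPart (f (\<sigma> i))) (v (\<sigma> ` {1..i})) = bot \<or>
            (\<exists>b\<in>{1..p}. min (negPart (f (\<sigma> i))) (v (\<sigma> ` {1..i})) \<le> min (magn (f (\<sigma> b))) (v (\<sigma> ` {1..b})))"
      proof (cases "i \<le> p")
        case False then have "\<not> isNeg (f (\<sigma> i))" using posi i by auto
        then show ?thesis by (simp add: negPart_eq)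
      next
        case True then have ii: "i \<in> {1..p}" using i by auto
        show ?thesis using negi[OF ii] ii by (intro disjI2 bexI[of _ i]) (auto simp: negPart_eq)
      qed
    next
      fix i assume i: "i \<in> {1..p}"
      then have "i \<in> {1..n}" using pn by auto
      then show "min (magn (f (\<sigma> i))) (v (\<sigma> ` {1..i})) = bot \<or>
            (\<exists>b\<in>{1..n}. min (magn (f (\<sigma> i))) (v (\<sigma> ` {1..i})) \<le> min (negPart (f (\<sigma> b))) (v (\<sigma> ` {1..b})))"
        using negi[OF i] by (intro disjI2 bexI[of _ i]) (auto simp: negPart_eq)
    qed auto
    finally show ?thesis .
  qed
  have L1: "SMaxL (map (\<lambda>i. sminL (f (\<sigma> i)) (posL (v (\<sigma> ` {1..i})))) [1..<p+1]) = negL (posL N)"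
  proof -
    have "\<forall>i\<in>set [1..<p+1]. isNeg (sminL (f (\<sigma> i)) (posL (v (\<sigma> ` {1..i}))))
              \<or> magn (sminL (f (\<sigma> i)) (posL (v (\<sigma> ` {1..i})))) = bot"
      using negi by (auto simp: sminL_neg)
    then have "SMaxL (map (\<lambda>i. sminL (f (\<sigma> i)) (posL (v (\<sigma> ` {1..i})))) [1..<p+1])
        = negL (posL (bigjoin (magn \<circ> (\<lambda>i. sminL (f (\<sigma> i)) (posL (v (\<sigma> ` {1..i}))))) (set [1..<p+1])))"
      by (rule SMaxL_map_neg)
    also have "set [1..<p+1] = {1..p}" by auto
    also have "bigjoin (magn \<circ> (\<lambda>i. sminL (f (\<sigma> i)) (posL (v (\<sigma> ` {1..i}))))) {1..p} = N"
      unfolding N_def by (rule bigjoin_cong) (simp add: sminL_neg negi)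
    finally show ?thesis .
  qed
  have L2: "SMaxL (map (\<lambda>i. sminL (f (\<sigma> i)) (posL (v (\<sigma> ` {i..n})))) [p+1..<n+1]) = posL P"
  proof -
    have "\<forall>i\<in>set [p+1..<n+1]. \<not> isNeg (sminL (f (\<sigma> i)) (posL (v (\<sigma> ` {i..n}))))"
      using posi by (auto simp: sminL_pos)
    then have "SMaxL (map (\<lambda>i. sminL (f (\<sigma> i)) (posL (v (\<sigma> ` {i..n})))) [p+1..<n+1])
        = posL (bigjoin (magn \<circ> (\<lambda>i. sminL (f (\<sigma> i)) (posL (v (\<sigma> ` {i..n}))))) (set [p+1..<n+1]))"
      by (rule SMaxL_map_pos)
    also have "set [p+1..<n+1] = {p+1..n}" by auto
    also have "bigjoin (magn \<circ> (\<lambda>i. sminL (f (\<sigma> i)) (posL (v (\<sigma> ` {i..n}))))) {p+1..n} = P"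
      unfolding P_def by (rule bigjoin_cong) (simp add: sminL_pos posi)
    finally show ?thesis .
  qed
  show ?thesis unfolding sym_sugeno_def SP SN L1 L2 by (rule smaxL_comm)
qed



lemma bigmeet_bot: "finite A \<Longrightarrow> a \<in> A \<Longrightarrow> g a = bot \<Longrightarrow> bigmeet g A = bot"
  using bigmeet_le[of A a g] by (simp add: bot_unique)

lemma bigmeet_empty[simp]: "bigmeet g {} = top" by (simp add: bigmeet_def)

lemma smaxL_top: "smaxL (posL top) (negL (posL top)) = zeroL"
  by (simp add: smaxL_def)

lemma zero_smaxL: "smaxL zeroL x = x"
  using smaxL_comm[of zeroL x] smaxL_zero[of x] by simp

lemma negL_zero: "negL zeroL = zeroL"
  by (simp add: negL_def)

lemma sminL_posL_zero: "sminL (posL a) zeroL = zeroL"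
  using sminL_pos[of "posL a" bot] by (simp add: zeroL_def)

lemma part2:
  fixes n :: nat and v :: "nat set \<Rightarrow> 'a::{linorder,order_bot,order_top}"
    and f :: "nat \<Rightarrow> 'a symL"
  assumes fm: "fuzzy_measure n v" and mt: "mobius_transform n v m"
  shows "(let Npos = {i\<in>{1..n}. leL zeroL (f i)};
             Nneg = {1..n} - Npos;
             T = (\<lambda>A. sminL (posL (m A))
                        (smaxL (posL (bigmeet (\<lambda>i. posPart (f i)) A))
                               (negL (posL (bigmeet (\<lambda>i. negPart (f i)) A)))))
         in sym_sugeno n v f =
            smaxL (smaxL (SMaxSet T {A. A \<subseteq> Npos}) (SMaxSet T {A. A \<subseteq> Nneg}))
                  (SMaxSet T {A. A \<subseteq> {1..n} \<and> A \<inter> Npos \<noteq> {} \<and> A \<inter> Nneg \<noteq> {}}))"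
proof -
  define Npos where "Npos = {i\<in>{1..n}. leL zeroL (f i)}"
  define Nneg where "Nneg = {1..n} - Npos"
  define T where "T = (\<lambda>A. sminL (posL (m A))
                        (smaxL (posL (bigmeet (\<lambda>i. posPart (f i)) A))
                               (negL (posL (bigmeet (\<lambda>i. negPart (f i)) A)))))"
  define hP where "hP = (\<lambda>i. posPart (f i))"
  define hN where "hN = (\<lambda>i. negPart (f i))"
  have Npos_iff: "i \<in> Npos \<longleftrightarrow> i \<in> {1..n} \<and> \<not> isNeg (f i)" for i
    by (simp add: Npos_def leL_zero)
  have Nneg_iff: "i \<in> Nneg \<longleftrightarrow> i \<in> {1..n} \<and> isNeg (f i)" for i
    by (auto simp: Nneg_def Npos_iff)
  have NposSub: "Npos \<subseteq> {1..n}" and NnegSub: "Nneg \<subseteq> {1..n}" by (auto simp: Npos_def Nneg_def)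
  have m0: "m {} = bot"
    using mt fm by (auto simp: mobius_transform_def mobius_upper_def fuzzy_measure_def bot_unique)
  have z: "zeroL = posL bot" by (simp add: zeroL_def)
  have T0: "T {} = zeroL"
    unfolding T_def by (simp add: smaxL_top z sminL_pos)
  have Tpos: "T A = posL (min (m A) (bigmeet hP A))" if A: "A \<subseteq> Npos" for A
  proof (cases "A = {}")
    case True then show ?thesis using T0 m0 z by simp
  next
    case False
    then obtain a where a: "a \<in> A" by blast
    have fA: "finite A" using finite_subset[OF subset_trans[OF A NposSub]] by simp
    have "bigmeet hN A = bot"
      by (rule bigmeet_bot[OF fA a]) (use A a Npos_iff in \<open>auto simp: hN_def negPart_eq\<close>)
    then show ?thesis unfolding T_def hN_def[symmetric] hP_def[symmetric]
      by (simp add: negL_posL_bot smaxL_zero sminL_pos)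
  qed
  have Tneg: "T A = negL (posL (min (m A) (bigmeet hN A)))" if A: "A \<subseteq> Nneg" for A
  proof (cases "A = {}")
    case True then show ?thesis using T0 m0 by (simp add: negL_posL_bot)
  next
    case False
    then obtain a where a: "a \<in> A" by blast
    have fA: "finite A" using finite_subset[OF subset_trans[OF A NnegSub]] by simp
    have "bigmeet hP A = bot"
      by (rule bigmeet_bot[OF fA a]) (use A a Nneg_iff in \<open>auto simp: hP_def posPart_eq\<close>)
    then show ?thesis unfolding T_def hN_def[symmetric] hP_def[symmetric]
      by (simp add: z[symmetric] zero_smaxL sminL_posneg)
  qed
  have Tmix: "T A = zeroL" if A: "A \<subseteq> {1..n}" "A \<inter> Npos \<noteq> {}" "A \<inter> Nneg \<noteq> {}" for A
  proof -
    obtain a where a: "a \<in> A" "a \<in> Npos" using A by blast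
    obtain b where b: "b \<in> A" "b \<in> Nneg" using A by blast
    have fA: "finite A" using A finite_subset by blast
    have "bigmeet hN A = bot"
      by (rule bigmeet_bot[OF fA a(1)]) (use a Npos_iff in \<open>auto simp: hN_def negPart_eq\<close>)
    moreover have "bigmeet hP A = bot"
      by (rule bigmeet_bot[OF fA b(1)]) (use b Nneg_iff in \<open>auto simp: hP_def posPart_eq\<close>)
    ultimately show ?thesis unfolding T_def hN_def[symmetric] hP_def[symmetric]
      by (simp add: negL_posL_bot z[symmetric] negL_zero smaxL_zero sminL_posL_zero)
  qed
  have finN: "finite Npos" "finite Nneg" by (auto simp: Npos_def Nneg_def)
  have S1: "SMaxSet T {A. A \<subseteq> Npos} = posL (sugeno n v hP)"
  proof -
    have "SMaxSet T {A. A \<subseteq> Npos} = posL (bigjoin (magn \<circ> T) {A. A \<subseteq> Npos})"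
      by (rule SMaxSet_pos) (use finN in \<open>auto simp: Tpos\<close>)
    also have "bigjoin (magn \<circ> T) {A. A \<subseteq> Npos} = bigjoin (\<lambda>A. min (m A) (bigmeet hP A)) (Pow {1..n})"
    proof (rule antisym; rule bigjoin_mono)
      fix A assume "A \<in> {A. A \<subseteq> Npos}"
      then show "(magn \<circ> T) A = bot \<or> (\<exists>b\<in>Pow {1..n}. (magn \<circ> T) A \<le> min (m b) (bigmeet hP b))"
        using Tpos[of A] by (intro disjI2 bexI[of _ A]) (auto simp: Npos_def)
    next
      fix A assume A: "A \<in> Pow {1..n}"
      show "min (m A) (bigmeet hP A) = bot \<or> (\<exists>b\<in>{A. A \<subseteq> Npos}. min (m A) (bigmeet hP A) \<le> (magn \<circ> T) b)"
      proof (cases "A \<subseteq> Npos")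
        case True then show ?thesis using Tpos[of A] by (intro disjI2 bexI[of _ A]) auto
      next
        case False
        then obtain a where a: "a \<in> A" "a \<notin> Npos" by blast
        have fA: "finite A" using A finite_subset by blast
        have "bigmeet hP A = bot"
          by (rule bigmeet_bot[OF fA a(1)]) (use a A Npos_iff in \<open>auto simp: hP_def posPart_eq\<close>)
        then show ?thesis by simp
      qed
    qed (use finN in auto)
    also have "\<dots> = charS n v hP" by (rule mobius_char[OF fm mt])
    also have "\<dots> = sugeno n v hP" by (rule sugeno_char[OF fm, symmetric])
    finally show ?thesis .
  qed
  have S2: "SMaxSet T {A. A \<subseteq> Nneg} = negL (posL (sugeno n v hN))"
  proof -
    have "SMaxSet T {A. A \<subseteq> Nneg} = negL (posL (bigjoin (magn \<circ> T) {A. A \<subseteq> Nneg}))"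
      by (rule SMaxSet_neg) (use finN in \<open>auto simp: Tneg\<close>)
    also have "bigjoin (magn \<circ> T) {A. A \<subseteq> Nneg} = bigjoin (\<lambda>A. min (m A) (bigmeet hN A)) (Pow {1..n})"
    proof (rule antisym; rule bigjoin_mono)
      fix A assume "A \<in> {A. A \<subseteq> Nneg}"
      then show "(magn \<circ> T) A = bot \<or> (\<exists>b\<in>Pow {1..n}. (magn \<circ> T) A \<le> min (m b) (bigmeet hN b))"
        using Tneg[of A] by (intro disjI2 bexI[of _ A]) (auto simp: Nneg_def)
    next
      fix A assume A: "A \<in> Pow {1..n}"
      show "min (m A) (bigmeet hN A) = bot \<or> (\<exists>b\<in>{A. A \<subseteq> Nneg}. min (m A) (bigmeet hN A) \<le> (magn \<circ> T) b)"
      proof (cases "A \<subseteq> Nneg")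
        case True then show ?thesis using Tneg[of A] by (intro disjI2 bexI[of _ A]) auto
      next
        case False
        then obtain a where a: "a \<in> A" "a \<notin> Nneg" by blast
        have fA: "finite A" using A finite_subset by blast
        have "bigmeet hN A = bot"
          by (rule bigmeet_bot[OF fA a(1)]) (use a A Nneg_iff in \<open>auto simp: hN_def negPart_eq\<close>)
        then show ?thesis by simp
      qed
    qed (use finN in auto)
    also have "\<dots> = charS n v hN" by (rule mobius_char[OF fm mt])
    also have "\<dots> = sugeno n v hN" by (rule sugeno_char[OF fm, symmetric])
    finally show ?thesis .
  qed
  have S3: "SMaxSet T {A. A \<subseteq> {1..n} \<and> A \<inter> Npos \<noteq> {} \<and> A \<inter> Nneg \<noteq> {}} = zeroL"
  proof -
    have fin: "finite {A. A \<subseteq> {1..n} \<and> A \<inter> Npos \<noteq> {} \<and> A \<inter> Nneg \<noteq> {}}" by auto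
    have "SMaxSet T {A. A \<subseteq> {1..n} \<and> A \<inter> Npos \<noteq> {} \<and> A \<inter> Nneg \<noteq> {}}
        = posL (bigjoin (magn \<circ> T) {A. A \<subseteq> {1..n} \<and> A \<inter> Npos \<noteq> {} \<and> A \<inter> Nneg \<noteq> {}})"
      by (rule SMaxSet_pos[OF fin]) (auto simp: Tmix)
    also have "bigjoin (magn \<circ> T) {A. A \<subseteq> {1..n} \<and> A \<inter> Npos \<noteq> {} \<and> A \<inter> Nneg \<noteq> {}} = bot"
      using bigjoin_le_iff[OF fin, of "magn \<circ> T" bot] Tmix by (simp add: bot_unique)
    finally show ?thesis by (simp add: z)
  qed
  show ?thesis
    unfolding Let_def Npos_def[symmetric] Nneg_def[symmetric] T_def[symmetric]
    unfolding S1 S2 S3 smaxL_zero sym_sugeno_def hP_def hN_def ..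
qed


theorem proposition4:
  fixes n :: nat and v :: "nat set \<Rightarrow> 'a::{linorder,order_bot,order_top}"
    and f :: "nat \<Rightarrow> 'a symL"
  assumes "fuzzy_measure n v"
  shows
    "(\<forall>(\<sigma>::nat \<Rightarrow> nat) p.
        bij_betw \<sigma> {1..n} {1..n} \<and> p \<le> n \<and>
        (\<forall>i\<in>{1..<n}. leL (f (\<sigma> i)) (f (\<sigma> (Suc i)))) \<and>
        (\<forall>i\<in>{1..p}. lessL (f (\<sigma> i)) zeroL) \<and>
        (\<forall>i\<in>{p+1..n}. leL zeroL (f (\<sigma> i)))
      \<longrightarrow> sym_sugeno n v f =
          smaxL (SMaxL (map (\<lambda>i. sminL (f (\<sigma> i)) (posL (v (\<sigma> ` {1..i})))) [1..<p+1]))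
                (SMaxL (map (\<lambda>i. sminL (f (\<sigma> i)) (posL (v (\<sigma> ` {i..n})))) [p+1..<n+1])))
     \<and>
     (\<forall>m. mobius_transform n v m \<longrightarrow>
        (let Npos = {i\<in>{1..n}. leL zeroL (f i)};
             Nneg = {1..n} - Npos;
             T = (\<lambda>A. sminL (posL (m A))
                        (smaxL (posL (bigmeet (\<lambda>i. posPart (f i)) A))
                               (negL (posL (bigmeet (\<lambda>i. negPart (f i)) A)))))
         in sym_sugeno n v f =
            smaxL (smaxL (SMaxSet T {A. A \<subseteq> Npos}) (SMaxSet T {A. A \<subseteq> Nneg}))
                  (SMaxSet T {A. A \<subseteq> {1..n} \<and> A \<inter> Npos \<noteq> {} \<and> A \<inter> Nneg \<noteq> {}})))"
    apply (intro conjI allI impI)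
   apply (elim conjE)
   apply (rule part1[OF assms]; assumption)
  apply (rule part2[OF assms]; assumption)
  done

end
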